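(* Let $m \in \mathbb N$ and let $\phi \colon \mathcal H_2^0 \to M_m$ be a map. Then the following are equivalent: (i) $\phi$ is real linear and $\phi(\mathcal{IH}_2^0) \subset \mathcal U_m$; (ii) there exist $U, V \in \mathcal U_m$ and $n \in \mathbb N$ such that $m = 2n$ and $\phi(A) = U(A \otimes I_n)V$ for all $A \in \mathcal H_2^0$.
   Context: $M_m$ is the set of $m\times m$ complex matrices, $\mathcal U_m$ the unitary ones, $\mathcal H_2^0$ the real vector space of trace-zero $2\times 2$ complex hermitian matrices, $\mathcal{IH}_2^0 = \mathcal H_2^0 \cap \mathcal U_2$, $I_n$ the identity matrix and $\otimes$ the Kronecker product. *)

theory Defs
  imports Complex_Main "Jordan_Normal_Form.Matrix"
begin

text \<open>Matrices are Jordan_Normal_Form matrices over complex numbers;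
  M_m is carrier_mat m m.\<close>

definition adjoint_mat :: "complex mat \<Rightarrow> complex mat" where
  "adjoint_mat A = mat (dim_col A) (dim_row A) (\<lambda>(i,j). cnj (A $$ (j,i)))"

definition unitary_mats :: "nat \<Rightarrow> complex mat set" where
  "unitary_mats m = {U. U \<in> carrier_mat m m \<and> adjoint_mat U * U = 1\<^sub>m m \<and> U * adjoint_mat U = 1\<^sub>m m}"

definition H20 :: "complex mat set" where
  "H20 = {A. A \<in> carrier_mat 2 2 \<and> adjoint_mat A = A \<and> A $$ (0,0) + A $$ (1,1) = 0}"

definition IH20 :: "complex mat set" where
  "IH20 = H20 \<inter> unitary_mats 2"

definition kron :: "complex mat \<Rightarrow> complex mat \<Rightarrow> complex mat" where
  "kron A B = mat (dim_row A * dim_row B) (dim_col A * dim_col B)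
     (\<lambda>(i,j). A $$ (i div dim_row B, j div dim_col B) * B $$ (i mod dim_row B, j mod dim_col B))"

definition real_linear_on_H20 :: "(complex mat \<Rightarrow> complex mat) \<Rightarrow> bool" where
  "real_linear_on_H20 \<phi> \<longleftrightarrow>
     (\<forall>A\<in>H20. \<forall>B\<in>H20. \<phi> (A + B) = \<phi> A + \<phi> B) \<and>
     (\<forall>A\<in>H20. \<forall>r::real. \<phi> (complex_of_real r \<cdot>\<^sub>m A) = complex_of_real r \<cdot>\<^sub>m \<phi> A)"

end

theory Submission
  imports Defs "Jordan_Normal_Form.Determinant"
begin


lemma adj_dims[simp]: "dim_row (adjoint_mat A) = dim_col A" "dim_col (adjoint_mat A) = dim_row A"
  by (auto simp: adjoint_mat_def)

lemma adj_index[simp]: "i < dim_col A \<Longrightarrow> j < dim_row A \<Longrightarrow> adjoint_mat A $$ (i,j) = cnj (A $$ (j,i))"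
  by (auto simp: adjoint_mat_def)

lemma adj_carrier[simp,intro]: "A \<in> carrier_mat n m \<Longrightarrow> adjoint_mat A \<in> carrier_mat m n"
  by (auto simp: adjoint_mat_def)

lemma adj_adj[simp]: "adjoint_mat (adjoint_mat A) = A"
  by (auto simp: adjoint_mat_def)

lemma mult_index[simp]: "i < dim_row A \<Longrightarrow> j < dim_col B \<Longrightarrow> dim_col A = dim_row B \<Longrightarrow>
   (A * B) $$ (i,j) = (\<Sum>k<dim_col A. A $$ (i,k) * B $$ (k,j))"
  by (auto simp: scalar_prod_def atLeast0LessThan intro!: sum.cong)

declare index_mult_mat(1)[simp del]

lemma sum_split_add: "(\<Sum>k<a+(b::nat). f k) = (\<Sum>k<a. f k) + (\<Sum>k<b. f (a+k))"
  by (induct b) (auto simp: add.assoc)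

lemma adj_mult: assumes "A \<in> carrier_mat n k" "B \<in> carrier_mat k m"
  shows "adjoint_mat (A * B) = adjoint_mat B * adjoint_mat A"
  using assms by (intro eq_matI) (auto simp: mult_index mult.commute)

lemma adj_add: assumes "A \<in> carrier_mat n m" "B \<in> carrier_mat n m"
  shows "adjoint_mat (A + B) = adjoint_mat A + adjoint_mat B"
  using assms by (intro eq_matI) auto

lemma adj_minus: assumes "A \<in> carrier_mat n m" "B \<in> carrier_mat n m"
  shows "adjoint_mat (A - B) = adjoint_mat A - adjoint_mat B"
  using assms by (intro eq_matI) auto

lemma adj_uminus: "adjoint_mat (- A) = - adjoint_mat A"
  by (intro eq_matI) auto

lemma adj_smult: "adjoint_mat (c \<cdot>\<^sub>m A) = cnj c \<cdot>\<^sub>m adjoint_mat A"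
  by (intro eq_matI) auto

lemma adj_one[simp]: "adjoint_mat (1\<^sub>m n) = 1\<^sub>m n"
  by (intro eq_matI) auto

lemma adj_zero[simp]: "adjoint_mat (0\<^sub>m n m) = 0\<^sub>m m n"
  by (intro eq_matI) auto

definition hcat :: "complex mat \<Rightarrow> complex mat \<Rightarrow> complex mat" where
  "hcat A B = mat (dim_row A) (dim_col A + dim_col B)
     (\<lambda>(i,j). if j < dim_col A then A $$ (i,j) else B $$ (i, j - dim_col A))"

lemma hcat_carrier[simp,intro]: "A \<in> carrier_mat n a \<Longrightarrow> B \<in> carrier_mat n b \<Longrightarrow> hcat A B \<in> carrier_mat n (a + b)"
  by (auto simp: hcat_def)

lemma hcat_dims[simp]: "dim_row (hcat A B) = dim_row A" "dim_col (hcat A B) = dim_col A + dim_col B"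
  by (auto simp: hcat_def)

lemma hcat_index: "i < dim_row A \<Longrightarrow> j < dim_col A + dim_col B \<Longrightarrow>
  hcat A B $$ (i,j) = (if j < dim_col A then A $$ (i,j) else B $$ (i, j - dim_col A))"
  by (auto simp: hcat_def)

lemma mult_hcat: assumes "M \<in> carrier_mat k n" "A \<in> carrier_mat n a" "B \<in> carrier_mat n b"
  shows "M * hcat A B = hcat (M * A) (M * B)"
  using assms by (intro eq_matI) (auto simp: mult_index hcat_index)

lemma hcat_mult_adj: assumes "A \<in> carrier_mat n a" "B \<in> carrier_mat n b"
   "A' \<in> carrier_mat n' a" "B' \<in> carrier_mat n' b"
  shows "hcat A B * adjoint_mat (hcat A' B') = A * adjoint_mat A' + B * adjoint_mat B'"
proof (intro eq_matI)
  fix i j assume ij: "i < dim_row (A * adjoint_mat A' + B * adjoint_mat B')"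
     "j < dim_col (A * adjoint_mat A' + B * adjoint_mat B')"
  have "(\<Sum>k<a+b. hcat A B $$ (i,k) * cnj (hcat A' B' $$ (j,k))) =
     (\<Sum>k<a. hcat A B $$ (i,k) * cnj (hcat A' B' $$ (j,k))) +
     (\<Sum>k<b. hcat A B $$ (i,a+k) * cnj (hcat A' B' $$ (j,a+k)))"
    by (simp add: sum_split_add)
  then show "(hcat A B * adjoint_mat (hcat A' B')) $$ (i, j) = (A * adjoint_mat A' + B * adjoint_mat B') $$ (i, j)"
    using assms ij by (simp add: mult_index hcat_index)
qed (use assms in auto)

lemma adj_hcat_mult: assumes "A \<in> carrier_mat n a" "B \<in> carrier_mat n b"
   "A' \<in> carrier_mat n a'" "B' \<in> carrier_mat n b'" "i < a + b" "j < a' + b'"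
  shows "(adjoint_mat (hcat A B) * hcat A' B') $$ (i,j) =
    (if i < a then (if j < a' then (adjoint_mat A * A') $$ (i,j) else (adjoint_mat A * B') $$ (i,j-a'))
     else (if j < a' then (adjoint_mat B * A') $$ (i-a,j) else (adjoint_mat B * B') $$ (i-a,j-a')))"
  using assms by (auto simp: mult_index hcat_index)



definition tr :: "complex mat \<Rightarrow> complex" where
  "tr A = (\<Sum>i<dim_row A. A $$ (i,i))"

lemma tr_comm: assumes "A \<in> carrier_mat n k" "B \<in> carrier_mat k n"
  shows "tr (A * B) = tr (B * A)"
proof -
  have "tr (A * B) = (\<Sum>i<n. \<Sum>j<k. A $$ (i,j) * B $$ (j,i))"
    using assms by (simp add: tr_def)
  also have "\<dots> = (\<Sum>j<k. \<Sum>i<n. B $$ (j,i) * A $$ (i,j))"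
    by (subst sum.swap) (simp add: mult.commute)
  also have "\<dots> = tr (B * A)" using assms by (simp add: tr_def)
  finally show ?thesis .
qed

lemma tr_add: "A \<in> carrier_mat n n \<Longrightarrow> B \<in> carrier_mat n n \<Longrightarrow> tr (A + B) = tr A + tr B"
  by (simp add: tr_def sum.distrib)

lemma tr_smult: "A \<in> carrier_mat n n \<Longrightarrow> tr (c \<cdot>\<^sub>m A) = c * tr A"
  by (simp add: tr_def sum_distrib_left)

lemma tr_uminus: "A \<in> carrier_mat n n \<Longrightarrow> tr (- A) = - tr A"
  by (simp add: tr_def sum_negf)

lemma tr_one: "tr (1\<^sub>m n) = of_nat n"
  by (simp add: tr_def)

definition ej :: "nat \<Rightarrow> nat \<Rightarrow> complex mat" where
  "ej m j = mat m 1 (\<lambda>(i,_). if i = j then 1 else 0)"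

lemma ej_carrier[simp]: "ej m j \<in> carrier_mat m 1" by (simp add: ej_def)

lemma mult_ej: assumes "A \<in> carrier_mat n m" "j < m" "i < n"
  shows "(A * ej m j) $$ (i,0) = A $$ (i,j)"
proof -
  have "(A * ej m j) $$ (i,0) = (\<Sum>k<m. A $$ (i,k) * (if k = j then 1 else 0))"
    using assms by (simp add: ej_def)
  also have "\<dots> = A $$ (i,j)" using assms(2)
    by (simp add: if_distrib[of "\<lambda>x. _ * x"] sum.delta' cong: if_cong)
  finally show ?thesis .
qed

lemma mat_eq_by_ej: assumes "A \<in> carrier_mat n m" "B \<in> carrier_mat n m"
  "\<And>j. j < m \<Longrightarrow> A * ej m j = B * ej m j"
  shows "A = B"
proof (rule eq_matI)
  fix i j assume "i < dim_row B" "j < dim_col B"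
  then have ij: "i < n" "j < m" using assms by auto
  have "A $$ (i,j) = (A * ej m j) $$ (i,0)" using mult_ej[OF assms(1) ij(2) ij(1)] by simp
  also have "\<dots> = (B * ej m j) $$ (i,0)" using assms(3)[OF ij(2)] by simp
  also have "\<dots> = B $$ (i,j)" using mult_ej[OF assms(2) ij(2) ij(1)] by simp
  finally show "A $$ (i,j) = B $$ (i,j)" .
qed (use assms in auto)



lemma cnj_mult_self: "cnj z * z = complex_of_real ((cmod z)^2)"
  by (metis complex_norm_square mult.commute of_real_power)

lemma minus_plus_cancel_mat: "(A :: complex mat) \<in> carrier_mat n m \<Longrightarrow> B \<in> carrier_mat n m \<Longrightarrow> A - B + B = A"
  by (intro eq_matI) auto

lemma plus_minus_cancel_mat: "(A :: complex mat) \<in> carrier_mat n m \<Longrightarrow> B \<in> carrier_mat n m \<Longrightarrow> B + (A - B) = A"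
  by (intro eq_matI) auto

lemma gs_step:
  assumes P: "P \<in> carrier_mat m m" and PP: "P * P = P"
    and E: "E \<in> carrier_mat m r" and EE: "adjoint_mat E * E = 1\<^sub>m r" and PE: "P * E = E"
    and p: "p \<in> carrier_mat m 1" and Pp: "P * p = p"
  shows "\<exists>r' E'. E' \<in> carrier_mat m r' \<and> adjoint_mat E' * E' = 1\<^sub>m r' \<and> P * E' = E' \<and>
           E' * adjoint_mat E' * p = p \<and>
           (\<forall>x \<in> carrier_mat m 1. E * adjoint_mat E * x = x \<longrightarrow> E' * adjoint_mat E' * x = x)"
proof -
  have aE: "adjoint_mat E \<in> carrier_mat r m" using E by auto
  define q where "q = p - E * (adjoint_mat E * p)"
  have q: "q \<in> carrier_mat m 1" using p E unfolding q_def by auto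
  have Eq: "adjoint_mat E * q = 0\<^sub>m r 1"
  proof -
    have "adjoint_mat E * q = adjoint_mat E * p - adjoint_mat E * (E * (adjoint_mat E * p))"
      unfolding q_def using p E aE by (subst mult_minus_distrib_mat[of _ r m]) auto
    also have "adjoint_mat E * (E * (adjoint_mat E * p)) = (adjoint_mat E * E) * (adjoint_mat E * p)"
      using p E aE by (subst assoc_mult_mat[of _ r m _ r]) auto
    also have "\<dots> = adjoint_mat E * p" using EE aE p E by simp
    finally show ?thesis using aE p by simp
  qed
  show ?thesis
  proof (cases "q = 0\<^sub>m m 1")
    case True
    have "E * adjoint_mat E * p = E * (adjoint_mat E * p)" using assoc_mult_mat[OF E aE p] .
    also have "\<dots> = p"
    proof (rule eq_matI)
      fix i j assume ij: "i < dim_row p" "j < dim_col p"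
      then have "(p - E * (adjoint_mat E * p)) $$ (i,j) = 0" using True p unfolding q_def by simp
      then show "(E * (adjoint_mat E * p)) $$ (i,j) = p $$ (i,j)" using ij p E aE
        by (simp del: mult_index)
    qed (use p E aE in auto)
    finally show ?thesis using E EE PE by blast
  next
    case False
    define s where "s = sqrt (\<Sum>k<m. (cmod (q $$ (k,0)))^2)"
    obtain k0 where k0: "k0 < m" "q $$ (k0,0) \<noteq> 0"
      using False q by (metis carrier_matD(1) carrier_matD(2) eq_matI index_zero_mat(1) less_one zero_carrier_mat)
    have "0 < (cmod (q $$ (k0,0)))^2" using k0 by simp
    also have "\<dots> \<le> (\<Sum>k<m. (cmod (q $$ (k,0)))^2)"
      using k0 by (intro member_le_sum) auto
    finally have spos: "s > 0" unfolding s_def by simp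
    define u where "u = complex_of_real (1 / s) \<cdot>\<^sub>m q"
    have u: "u \<in> carrier_mat m 1" unfolding u_def using q by simp
    have qu: "q = complex_of_real s \<cdot>\<^sub>m u"
      unfolding u_def using spos q by (intro eq_matI) auto
    have uu: "adjoint_mat u * u = 1\<^sub>m 1"
    proof (rule eq_matI)
      fix i j assume "i < dim_row (1\<^sub>m 1 :: complex mat)" "j < dim_col (1\<^sub>m 1 :: complex mat)"
      then have ij: "i = 0" "j = 0" by auto
      have "(adjoint_mat u * u) $$ (0,0) = (\<Sum>k<m. cnj (u $$ (k,0)) * u $$ (k,0))"
        using u by simp
      also have "\<dots> = (\<Sum>k<m. complex_of_real ((1/s)^2 * (cmod (q $$ (k,0)))^2))"
        unfolding cnj_mult_self using q by (intro sum.cong) (use spos in \<open>auto simp: u_def norm_divide power_divide\<close>)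
      also have "\<dots> = complex_of_real ((1/s)^2 * (\<Sum>k<m. (cmod (q $$ (k,0)))^2))"
        by (simp add: sum_distrib_left)
      also have "\<dots> = 1" using spos unfolding s_def
        by (simp add: power_divide)
      finally show "(adjoint_mat u * u) $$ (i,j) = 1\<^sub>m 1 $$ (i,j)" using ij by simp
    qed (use u in auto)
    have Eu: "adjoint_mat E * u = 0\<^sub>m r 1"
      unfolding u_def using Eq aE q by (simp add: mult_smult_distrib[of _ r m])
    have uE: "adjoint_mat u * E = 0\<^sub>m 1 r"
      using arg_cong[OF Eu, of adjoint_mat] adj_mult[OF aE u] by simp
    have Pq: "P * q = q"
    proof -
      have "P * q = P * p - P * (E * (adjoint_mat E * p))"
        unfolding q_def using p E aE P by (subst mult_minus_distrib_mat[of _ m m]) auto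
      also have "P * (E * (adjoint_mat E * p)) = (P * E) * (adjoint_mat E * p)"
        using p E aE P by (subst assoc_mult_mat[of _ m m _ r]) auto
      finally show ?thesis using Pp PE unfolding q_def by simp
    qed
    have Pu: "P * u = u" unfolding u_def using Pq P q by (simp add: mult_smult_distrib[of _ m m])
    define E' where "E' = hcat E u"
    have E': "E' \<in> carrier_mat m (r + 1)" unfolding E'_def using E u by auto
    have E'E': "adjoint_mat E' * E' = 1\<^sub>m (r+1)"
    proof (rule eq_matI)
      fix i j assume "i < dim_row (1\<^sub>m (r + 1) :: complex mat)" "j < dim_col (1\<^sub>m (r + 1) :: complex mat)"
      then have ij: "i < r + 1" "j < r + 1" by auto
      show "(adjoint_mat E' * E') $$ (i,j) = 1\<^sub>m (r + 1) $$ (i,j)"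
        unfolding E'_def
        apply (subst adj_hcat_mult[OF E u E u ij])
        using ij EE Eu uE uu
        by (auto simp del: mult_index simp: less_Suc_eq)
    qed (use E' in auto)
    have PE': "P * E' = E'" unfolding E'_def using P E u PE Pu by (simp add: mult_hcat)
    have E'adj: "E' * adjoint_mat E' = E * adjoint_mat E + u * adjoint_mat u"
      unfolding E'_def using E u by (simp add: hcat_mult_adj)
    have key: "E' * adjoint_mat E' * x = E * adjoint_mat E * x + u * (adjoint_mat u * x)"
      if x: "x \<in> carrier_mat m 1" for x
      unfolding E'adj using x E u aE
      by (subst add_mult_distrib_mat[of _ m m]) (auto simp: assoc_mult_mat[OF u adj_carrier[OF u] x])
    have ux0: "adjoint_mat u * x = 0\<^sub>m 1 1" if x: "x \<in> carrier_mat m 1" and Ex: "E * adjoint_mat E * x = x" for x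
    proof -
      have "adjoint_mat u * x = adjoint_mat u * (E * (adjoint_mat E * x))"
        using Ex E aE x by simp
      also have "\<dots> = (adjoint_mat u * E) * (adjoint_mat E * x)"
        using u E aE x by (subst assoc_mult_mat[of _ 1 m _ r]) auto
      finally show ?thesis using uE aE x left_mult_zero_mat[OF mult_carrier_mat[OF aE x]] by simp
    qed
    have up: "adjoint_mat u * p = complex_of_real s \<cdot>\<^sub>m 1\<^sub>m 1"
    proof -
      have pdec: "p = q + E * (adjoint_mat E * p)" unfolding q_def
        using minus_plus_cancel_mat[OF p mult_carrier_mat[OF E mult_carrier_mat[OF aE p]]] by simp
      have "adjoint_mat u * p = adjoint_mat u * q + adjoint_mat u * (E * (adjoint_mat E * p))"
        using u q E aE p by (subst pdec, subst mult_add_distrib_mat[of _ 1 m]) auto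
      also have "adjoint_mat u * (E * (adjoint_mat E * p)) = (adjoint_mat u * E) * (adjoint_mat E * p)"
        using u E aE p by (subst assoc_mult_mat[of _ 1 m _ r]) auto
      also have "adjoint_mat u * q = complex_of_real s \<cdot>\<^sub>m 1\<^sub>m 1"
        unfolding qu using u uu by (simp add: mult_smult_distrib[of _ 1 m])
      finally show ?thesis using uE aE p left_mult_zero_mat[OF mult_carrier_mat[OF aE p]] u by simp
    qed
    have "E' * adjoint_mat E' * p = p"
    proof -
      have "E' * adjoint_mat E' * p = E * adjoint_mat E * p + u * (complex_of_real s \<cdot>\<^sub>m 1\<^sub>m 1)"
        using key[OF p] up by simp
      also have "u * (complex_of_real s \<cdot>\<^sub>m 1\<^sub>m 1) = q"
        unfolding qu using u mult_smult_distrib[OF u one_carrier_mat, of "complex_of_real s"] by simp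
      also have "E * adjoint_mat E * p + q = p" unfolding q_def using E aE p
        using plus_minus_cancel_mat[OF p mult_carrier_mat[OF E mult_carrier_mat[OF aE p]]]
        by (simp add: assoc_mult_mat[OF E aE p])
      finally show ?thesis .
    qed
    moreover have "\<forall>x \<in> carrier_mat m 1. E * adjoint_mat E * x = x \<longrightarrow> E' * adjoint_mat E' * x = x"
      using key ux0 u by simp
    ultimately show ?thesis using E' E'E' PE' by blast
  qed
qed



lemma gs:
  assumes P: "P \<in> carrier_mat m m" and PP: "P * P = P" and Ph: "adjoint_mat P = P"
  shows "\<exists>r E. E \<in> carrier_mat m r \<and> adjoint_mat E * E = 1\<^sub>m r \<and> P * E = E \<and> E * adjoint_mat E = P"
proof -
  have "\<exists>r E. E \<in> carrier_mat m r \<and> adjoint_mat E * E = 1\<^sub>m r \<and> P * E = E \<and>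
          (\<forall>j<k. E * adjoint_mat E * (P * ej m j) = P * ej m j)" if "k \<le> m" for k
    using that
  proof (induct k)
    case 0
    have "0\<^sub>m m 0 \<in> carrier_mat m 0" by simp
    moreover have "adjoint_mat (0\<^sub>m m 0) * 0\<^sub>m m 0 = 1\<^sub>m 0" by (intro eq_matI) auto
    moreover have "P * 0\<^sub>m m 0 = 0\<^sub>m m 0" using P by simp
    ultimately show ?case by blast
  next
    case (Suc k)
    then obtain r E where E: "E \<in> carrier_mat m r" and EE: "adjoint_mat E * E = 1\<^sub>m r"
      and PE: "P * E = E" and IH: "\<forall>j<k. E * adjoint_mat E * (P * ej m j) = P * ej m j" by auto
    have p: "P * ej m k \<in> carrier_mat m 1" using mult_carrier_mat[OF P ej_carrier] .
    have Pp: "P * (P * ej m k) = P * ej m k"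
      using PP P by (simp add: assoc_mult_mat[OF P P ej_carrier, symmetric])
    from gs_step[OF P PP E EE PE p Pp] obtain r' E' where new:
      "E' \<in> carrier_mat m r'" "adjoint_mat E' * E' = 1\<^sub>m r'" "P * E' = E'"
      "E' * adjoint_mat E' * (P * ej m k) = P * ej m k"
      "\<forall>x\<in>carrier_mat m 1. E * adjoint_mat E * x = x \<longrightarrow> E' * adjoint_mat E' * x = x" by blast
    have pc: "\<And>j. P * ej m j \<in> carrier_mat m 1" using mult_carrier_mat[OF P ej_carrier] .
    then show ?case using IH P new by (intro exI[of _ r'] exI[of _ E']) (auto simp: less_Suc_eq)
  qed
  from this[OF order_refl] obtain r E where E: "E \<in> carrier_mat m r" and EE: "adjoint_mat E * E = 1\<^sub>m r"
      and PE: "P * E = E" and all: "\<forall>j<m. E * adjoint_mat E * (P * ej m j) = P * ej m j" by auto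
  have aE: "adjoint_mat E \<in> carrier_mat r m" using E by auto
  have EEP: "E * adjoint_mat E * P = P"
  proof (rule mat_eq_by_ej[of _ m m])
    fix j assume j: "j < m"
    show "E * adjoint_mat E * P * ej m j = P * ej m j"
      using all j assoc_mult_mat[OF mult_carrier_mat[OF E aE] P ej_carrier] by simp
  qed (use E P in auto)
  have "adjoint_mat (E * adjoint_mat E * P) = P * (E * adjoint_mat E)"
    using E aE P Ph adj_mult[OF E aE] by (simp add: adj_mult[of _ m m])
  also have "\<dots> = E * adjoint_mat E"
    using PE by (simp add: assoc_mult_mat[OF P E aE, symmetric])
  finally have "E * adjoint_mat E = P" using EEP Ph by simp
  then show ?thesis using E EE PE by blast
qed



lemma kron_I_index: assumes "A \<in> carrier_mat 2 2" "k < 2 * n" "j < 2 * n"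
  shows "kron A (1\<^sub>m n) $$ (k,j) = (if k mod n = j mod n then A $$ (k div n, j div n) else 0)"
proof -
  have n: "n > 0" using assms by auto
  show ?thesis using assms n unfolding kron_def by (auto simp: mult.commute)
qed

lemma kron_I_carrier[simp,intro]: "A \<in> carrier_mat 2 2 \<Longrightarrow> kron A (1\<^sub>m n) \<in> carrier_mat (2*n) (2*n)"
  by (auto simp: kron_def)

lemma sum_delta_mult: fixes f :: "nat \<Rightarrow> complex" assumes "j < n" shows "(\<Sum>k<n. f k * (if k = j then c else 0)) = f j * c"
proof -
  have "(\<Sum>k<n. f k * (if k = j then c else 0)) = (\<Sum>k<n. if k = j then f k * c else 0)"
    by (rule sum.cong) auto
  then show ?thesis using assms by simp
qed

lemma hcat_kron: assumes A: "A \<in> carrier_mat m n" and B: "B \<in> carrier_mat m n" and M: "M \<in> carrier_mat 2 2"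
  shows "hcat A B * kron M (1\<^sub>m n) =
     hcat (M $$ (0,0) \<cdot>\<^sub>m A + M $$ (1,0) \<cdot>\<^sub>m B) (M $$ (0,1) \<cdot>\<^sub>m A + M $$ (1,1) \<cdot>\<^sub>m B)"
proof (rule eq_matI)
  fix i j assume "i < dim_row (hcat (M $$ (0,0) \<cdot>\<^sub>m A + M $$ (1,0) \<cdot>\<^sub>m B) (M $$ (0,1) \<cdot>\<^sub>m A + M $$ (1,1) \<cdot>\<^sub>m B))"
    "j < dim_col (hcat (M $$ (0,0) \<cdot>\<^sub>m A + M $$ (1,0) \<cdot>\<^sub>m B) (M $$ (0,1) \<cdot>\<^sub>m A + M $$ (1,1) \<cdot>\<^sub>m B))"
  then have i: "i < m" and j: "j < n + n" using A B by auto
  have K: "kron M (1\<^sub>m n) \<in> carrier_mat (n+n) (n+n)" using M kron_I_carrier[OF M, of n] by (simp add: mult_2)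
  have "(hcat A B * kron M (1\<^sub>m n)) $$ (i,j) = (\<Sum>k<n+n. hcat A B $$ (i,k) * kron M (1\<^sub>m n) $$ (k,j))"
    using A B K i j by simp
  also have "\<dots> = (\<Sum>k<n. A $$ (i,k) * kron M (1\<^sub>m n) $$ (k,j)) + (\<Sum>k<n. B $$ (i,k) * kron M (1\<^sub>m n) $$ (n+k,j))"
    using A B i by (simp add: sum_split_add hcat_index)
  also have "\<dots> = (if j < n then M $$ (0,0) * A $$ (i,j) + M $$ (1,0) * B $$ (i,j)
        else M $$ (0,1) * A $$ (i,j-n) + M $$ (1,1) * B $$ (i,j-n))"
  proof (cases "j < n")
    case True
    have "(\<Sum>k<n. A $$ (i,k) * kron M (1\<^sub>m n) $$ (k,j)) = (\<Sum>k<n. A $$ (i,k) * (if k = j then M $$ (0,0) else 0))"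
      using True M by (intro sum.cong) (auto simp: kron_I_index)
    moreover have "(\<Sum>k<n. B $$ (i,k) * kron M (1\<^sub>m n) $$ (n+k,j)) = (\<Sum>k<n. B $$ (i,k) * (if k = j then M $$ (1,0) else 0))"
      using True M by (intro sum.cong) (auto simp: kron_I_index)
    ultimately show ?thesis using True by (simp add: sum_delta_mult mult.commute)
  next
    case False
    then obtain j' where j': "j = n + j'" "j' < n" using j by (metis add_less_imp_less_left le_add_diff_inverse not_less)
    have "(\<Sum>k<n. A $$ (i,k) * kron M (1\<^sub>m n) $$ (k,j)) = (\<Sum>k<n. A $$ (i,k) * (if k = j' then M $$ (0,1) else 0))"
      using j' M by (intro sum.cong) (auto simp: kron_I_index)
    moreover have "(\<Sum>k<n. B $$ (i,k) * kron M (1\<^sub>m n) $$ (n+k,j)) = (\<Sum>k<n. B $$ (i,k) * (if k = j' then M $$ (1,1) else 0))"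
      using j' M by (intro sum.cong) (auto simp: kron_I_index)
    ultimately show ?thesis using False j' by (simp add: sum_delta_mult mult.commute)
  qed
  also have "\<dots> = hcat (M $$ (0,0) \<cdot>\<^sub>m A + M $$ (1,0) \<cdot>\<^sub>m B) (M $$ (0,1) \<cdot>\<^sub>m A + M $$ (1,1) \<cdot>\<^sub>m B) $$ (i,j)"
    using A B i j by (simp add: hcat_index)
  finally show "(hcat A B * kron M (1\<^sub>m n)) $$ (i,j) = hcat (M $$ (0,0) \<cdot>\<^sub>m A + M $$ (1,0) \<cdot>\<^sub>m B) (M $$ (0,1) \<cdot>\<^sub>m A + M $$ (1,1) \<cdot>\<^sub>m B) $$ (i,j)" .
qed (use A B M in \<open>auto simp: kron_def\<close>)

definition sx :: "complex mat" where "sx = mat 2 2 (\<lambda>(i,j). if i = j then 0 else 1)"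
definition sy :: "complex mat" where "sy = mat 2 2 (\<lambda>(i,j). if i = j then 0 else if i = 0 then - \<i> else \<i>)"
definition sz :: "complex mat" where "sz = mat 2 2 (\<lambda>(i,j). if i = j then (if i = 0 then 1 else -1) else 0)"

lemma pauli_carrier[simp]: "sx \<in> carrier_mat 2 2" "sy \<in> carrier_mat 2 2" "sz \<in> carrier_mat 2 2"
  by (auto simp: sx_def sy_def sz_def)

lemma hcat_sz: "A \<in> carrier_mat m n \<Longrightarrow> B \<in> carrier_mat m n \<Longrightarrow> hcat A B * kron sz (1\<^sub>m n) = hcat A (- B)"
  by (subst hcat_kron) (auto simp: sz_def intro!: arg_cong2[where f=hcat] eq_matI)

lemma hcat_sx: "A \<in> carrier_mat m n \<Longrightarrow> B \<in> carrier_mat m n \<Longrightarrow> hcat A B * kron sx (1\<^sub>m n) = hcat B A"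
  by (subst hcat_kron) (auto simp: sx_def intro!: arg_cong2[where f=hcat] eq_matI)



lemma smult_smult_mat: "a \<cdot>\<^sub>m (b \<cdot>\<^sub>m (A :: complex mat)) = (a * b) \<cdot>\<^sub>m A"
  by (intro eq_matI) auto

lemma self_neg_zero: assumes X: "(X :: complex mat) \<in> carrier_mat n k" and e: "X = - X"
  shows "X = 0\<^sub>m n k"
proof (rule eq_matI)
  fix i j assume ij: "i < dim_row (0\<^sub>m n k :: complex mat)" "j < dim_col (0\<^sub>m n k :: complex mat)"
  have "X $$ (i,j) = (- X) $$ (i,j)" using e by simp
  then show "X $$ (i,j) = 0\<^sub>m n k $$ (i,j)" using X ij by simp
qed (use X in auto)

lemma key_lemma:
  assumes C: "C \<in> carrier_mat m m" and D: "D \<in> carrier_mat m m"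
    and Ch: "adjoint_mat C = C" and Dh: "adjoint_mat D = D"
    and CC: "C * C = 1\<^sub>m m" and DD: "D * D = 1\<^sub>m m" and CD: "C * D = - (D * C)"
  shows "\<exists>n W. m = 2 * n \<and> W \<in> unitary_mats m \<and> C * W = W * kron sz (1\<^sub>m n) \<and> D * W = W * kron sx (1\<^sub>m n)"
proof -
  define P where "P = (1/2) \<cdot>\<^sub>m (1\<^sub>m m + C)"
  have P: "P \<in> carrier_mat m m" unfolding P_def using C by auto
  have Ph: "adjoint_mat P = P" unfolding P_def using C Ch by (simp add: adj_smult adj_add[of _ m m])
  have IC: "1\<^sub>m m + C \<in> carrier_mat m m" using C by auto
  have sq: "(1\<^sub>m m + C) * (1\<^sub>m m + C) = 2 \<cdot>\<^sub>m (1\<^sub>m m + C)"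
  proof -
    have "(1\<^sub>m m + C) * (1\<^sub>m m + C) = 1\<^sub>m m * (1\<^sub>m m + C) + C * (1\<^sub>m m + C)"
      using add_mult_distrib_mat[OF one_carrier_mat C IC] .
    also have "\<dots> = (1\<^sub>m m + C) + (C + 1\<^sub>m m)"
      using C IC CC by (simp add: mult_add_distrib_mat[OF C one_carrier_mat C])
    also have "\<dots> = 2 \<cdot>\<^sub>m (1\<^sub>m m + C)" using C by (intro eq_matI) auto
    finally show ?thesis .
  qed
  have PP: "P * P = P" unfolding P_def
    using IC sq by (simp add: mult_smult_assoc_mat[of _ m m] mult_smult_distrib[of _ m m] smult_smult_mat)
  obtain n E where E: "E \<in> carrier_mat m n" and EE: "adjoint_mat E * E = 1\<^sub>m n"
    and PE: "P * E = E" and EEP: "E * adjoint_mat E = P" using gs[OF P PP Ph] by blast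
  have aE: "adjoint_mat E \<in> carrier_mat n m" using E by auto
  have CE: "C * E = E"
  proof -
    have "C = 2 \<cdot>\<^sub>m P - 1\<^sub>m m" unfolding P_def using C by (intro eq_matI) (auto simp: field_simps)
    then have "C * E = (2 \<cdot>\<^sub>m P) * E - 1\<^sub>m m * E"
      using P E by (simp add: minus_mult_distrib_mat[of _ m m])
    also have "\<dots> = 2 \<cdot>\<^sub>m E - E" using P E PE by (simp add: mult_smult_assoc_mat[of _ m m])
    also have "\<dots> = E" using E by (intro eq_matI) auto
    finally show ?thesis .
  qed
  have trC: "tr C = 0"
  proof -
    have "tr C = tr ((C * D) * D)" using C D DD by (simp add: assoc_mult_mat[OF C D D])
    also have "\<dots> = tr (D * (C * D))" using C D by (intro tr_comm[of _ m m]) auto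
    also have "\<dots> = - tr (D * D * C)" using C D CD
      by (simp add: assoc_mult_mat[OF D D C] tr_uminus[of _ m])
    also have "\<dots> = - tr C" using DD C by simp
    finally show ?thesis by simp
  qed
  have "tr P = of_nat n"
  proof -
    have "tr P = tr (E * adjoint_mat E)" using EEP by simp
    also have "\<dots> = tr (adjoint_mat E * E)" using E aE by (intro tr_comm) auto
    finally show ?thesis using EE tr_one by simp
  qed
  moreover have "tr P = of_nat m / 2"
    unfolding P_def using C IC trC by (simp add: tr_smult[of _ m] tr_add[of _ m] tr_one)
  ultimately have "(of_nat m :: complex) = of_nat (2 * n)" by simp
  then have mn: "m = 2 * n" using of_nat_eq_iff by blast
  define F where "F = D * E"
  have F: "F \<in> carrier_mat m n" unfolding F_def using D E by auto
  have aF: "adjoint_mat F = adjoint_mat E * D" unfolding F_def using D E Dh by (simp add: adj_mult)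
  have EC: "adjoint_mat E * C = adjoint_mat E" using adj_mult[OF C E] CE Ch by simp
  have EF: "adjoint_mat E * F = 0\<^sub>m n n"
  proof -
    have "adjoint_mat E * F = adjoint_mat E * (D * (C * E))" unfolding F_def using CE by simp
    also have "\<dots> = adjoint_mat E * ((D * C) * E)" using D C E by (simp add: assoc_mult_mat[OF D C E])
    also have "\<dots> = - (adjoint_mat E * ((C * D) * E))" using CD C D E aE
      by (simp add: uminus_mult_left_mat)
    also have "adjoint_mat E * ((C * D) * E) = (adjoint_mat E * C) * (D * E)"
      using C D E aE by (simp add: assoc_mult_mat[of _ n m _ m _ n] assoc_mult_mat[OF C D E])
    finally have "adjoint_mat E * F = - (adjoint_mat E * F)" using EC unfolding F_def by simp
    then show ?thesis using self_neg_zero[OF mult_carrier_mat[OF aE F]] by simp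
  qed
  have FE: "adjoint_mat F * E = 0\<^sub>m n n"
    using arg_cong[OF EF, of adjoint_mat] adj_mult[OF aE F] by simp
  have FF: "adjoint_mat F * F = 1\<^sub>m n"
  proof -
    have "adjoint_mat F * F = (adjoint_mat E * D) * (D * E)" using aF F_def by simp
    also have "\<dots> = adjoint_mat E * (D * (D * E))"
      using assoc_mult_mat[OF aE D mult_carrier_mat[OF D E]] .
    also have "\<dots> = adjoint_mat E * E" using DD D E by (simp add: assoc_mult_mat[OF D D E, symmetric])
    finally show ?thesis using EE by simp
  qed
  define W where "W = hcat E F"
  have W: "W \<in> carrier_mat m m" unfolding W_def using E F mn by (metis hcat_carrier mult_2)
  have WW: "adjoint_mat W * W = 1\<^sub>m m"
  proof (rule eq_matI)
    fix i j assume "i < dim_row (1\<^sub>m m :: complex mat)" "j < dim_col (1\<^sub>m m :: complex mat)"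
    then have ij: "i < n + n" "j < n + n" using mn by auto
    show "(adjoint_mat W * W) $$ (i,j) = 1\<^sub>m m $$ (i,j)"
      unfolding W_def
      apply (subst adj_hcat_mult[OF E F E F ij])
      using ij EE EF FE FF mn
      by (auto simp del: mult_index)
  qed (use W in auto)
  have WW': "W * adjoint_mat W = 1\<^sub>m m"
    using mat_mult_left_right_inverse[OF adj_carrier[OF W] W WW] .
  have CF: "C * F = - F"
  proof -
    have "C * F = (C * D) * E" unfolding F_def using assoc_mult_mat[OF C D E] by simp
    also have "\<dots> = - (D * (C * E))" using CD C D E by (simp add: assoc_mult_mat[OF D C E])
    finally show ?thesis using CE unfolding F_def by simp
  qed
  have DF: "D * F = E" unfolding F_def using DD D E by (simp add: assoc_mult_mat[OF D D E, symmetric])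
  have "C * W = W * kron sz (1\<^sub>m n)"
    unfolding W_def using C E F CE CF by (simp add: mult_hcat hcat_sz)
  moreover have "D * W = W * kron sx (1\<^sub>m n)"
    unfolding W_def using D E F DF F_def[symmetric] by (simp add: mult_hcat hcat_sx)
  moreover have "W \<in> unitary_mats m" unfolding unitary_mats_def using W WW WW' by simp
  ultimately show ?thesis using mn by blast
qed



lemma div_lt2[simp]: "i < 2 * n \<Longrightarrow> i div n < (2::nat)"
  by (rule less_mult_imp_div_less)

lemma kron_dims[simp]: "dim_row (kron A B) = dim_row A * dim_row B" "dim_col (kron A B) = dim_col A * dim_col B"
  by (auto simp: kron_def)

lemma kron_I_add: "A \<in> carrier_mat 2 2 \<Longrightarrow> B \<in> carrier_mat 2 2 \<Longrightarrow>
  kron (A + B) (1\<^sub>m n) = kron A (1\<^sub>m n) + kron B (1\<^sub>m n)"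
  by (intro eq_matI) (auto simp: kron_def distrib_right)

lemma kron_I_smult: "A \<in> carrier_mat 2 2 \<Longrightarrow> kron (c \<cdot>\<^sub>m A) (1\<^sub>m n) = c \<cdot>\<^sub>m kron A (1\<^sub>m n)"
  by (intro eq_matI) (auto simp: kron_def)

lemma kron_I_adj: assumes A: "A \<in> carrier_mat 2 2"
  shows "adjoint_mat (kron A (1\<^sub>m n)) = kron (adjoint_mat A) (1\<^sub>m n)"
proof (rule eq_matI)
  fix i j assume "i < dim_row (kron (adjoint_mat A) (1\<^sub>m n))" "j < dim_col (kron (adjoint_mat A) (1\<^sub>m n))"
  then have ij: "i < 2 * n" "j < 2 * n" using A by (auto simp: kron_def)
  have aA: "adjoint_mat A \<in> carrier_mat 2 2" using A by auto
  have n: "n > 0" using ij by auto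
  show "adjoint_mat (kron A (1\<^sub>m n)) $$ (i, j) = kron (adjoint_mat A) (1\<^sub>m n) $$ (i, j)"
    using ij A aA kron_I_carrier[OF A, of n] n
    by (auto simp: kron_I_index)
qed (use A in \<open>auto simp: kron_def\<close>)

lemma kron_I_one: "kron (1\<^sub>m 2) (1\<^sub>m n) = 1\<^sub>m (2 * n)"
proof (rule eq_matI)
  fix i j assume "i < dim_row (1\<^sub>m (2 * n) :: complex mat)" "j < dim_col (1\<^sub>m (2 * n) :: complex mat)"
  then have ij: "i < 2 * n" "j < 2 * n" by auto
  have "i = j \<longleftrightarrow> (i mod n = j mod n \<and> i div n = j div n)"
    by (metis div_mult_mod_eq)
  moreover have "i div n < 2" "j div n < 2" using ij by (auto simp: less_mult_imp_div_less mult.commute)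
  ultimately show "kron (1\<^sub>m 2) (1\<^sub>m n) $$ (i, j) = 1\<^sub>m (2 * n) $$ (i, j)"
    using ij by (auto simp: kron_I_index)
qed (auto simp: kron_def)

definition kcol :: "complex mat \<Rightarrow> nat \<Rightarrow> nat \<Rightarrow> complex mat" where
  "kcol A n c = mat (2 * n) n (\<lambda>(i,k). if i mod n = k then A $$ (i div n, c) else 0)"

lemma kcol_carrier[simp]: "kcol A n c \<in> carrier_mat (2 * n) n" by (simp add: kcol_def)

lemma kron_hcat: assumes A: "A \<in> carrier_mat 2 2"
  shows "kron A (1\<^sub>m n) = hcat (kcol A n 0) (kcol A n 1)"
proof (rule eq_matI)
  fix i j assume "i < dim_row (hcat (kcol A n 0) (kcol A n 1))" "j < dim_col (hcat (kcol A n 0) (kcol A n 1))"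
  then have ij: "i < 2 * n" "j < n + n" by (auto simp: kcol_def)
  show "kron A (1\<^sub>m n) $$ (i, j) = hcat (kcol A n 0) (kcol A n 1) $$ (i, j)"
  proof (cases "j < n")
    case True
    then show ?thesis using ij A by (auto simp: kron_I_index hcat_index kcol_def)
  next
    case False
    then obtain j' where j': "j = n + j'" "j' < n" using ij by (metis add_less_imp_less_left le_add_diff_inverse not_less)
    then show ?thesis using ij A by (auto simp: kron_I_index hcat_index kcol_def)
  qed
qed (use A in \<open>auto simp: kron_def kcol_def\<close>)

lemma sum2: "(\<Sum>k<(2::nat). f k) = f 0 + (f 1 :: complex)"
  by (simp add: numeral_2_eq_2)

lemma kron_I_mult: assumes A: "A \<in> carrier_mat 2 2" and B: "B \<in> carrier_mat 2 2"
  shows "kron A (1\<^sub>m n) * kron B (1\<^sub>m n) = kron (A * B) (1\<^sub>m n)"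
proof -
  have "kron A (1\<^sub>m n) * kron B (1\<^sub>m n) =
     hcat (B $$ (0,0) \<cdot>\<^sub>m kcol A n 0 + B $$ (1,0) \<cdot>\<^sub>m kcol A n 1) (B $$ (0,1) \<cdot>\<^sub>m kcol A n 0 + B $$ (1,1) \<cdot>\<^sub>m kcol A n 1)"
    unfolding kron_hcat[OF A] by (rule hcat_kron[OF kcol_carrier kcol_carrier B])
  also have "\<dots> = kron (A * B) (1\<^sub>m n)"
    unfolding kron_hcat[OF mult_carrier_mat[OF A B]]
    using A B by (intro arg_cong2[where f=hcat] eq_matI) (auto simp: kcol_def sum2 mult.commute)
  finally show ?thesis .
qed



lemma unitaryD: "U \<in> unitary_mats m \<Longrightarrow> U \<in> carrier_mat m m \<and> adjoint_mat U * U = 1\<^sub>m m \<and> U * adjoint_mat U = 1\<^sub>m m"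
  by (simp add: unitary_mats_def)

lemma unitary_mult: assumes U: "U \<in> unitary_mats m" and V: "V \<in> unitary_mats m"
  shows "U * V \<in> unitary_mats m"
proof -
  have U1: "U \<in> carrier_mat m m" "adjoint_mat U * U = 1\<^sub>m m" "U * adjoint_mat U = 1\<^sub>m m" using unitaryD[OF U] by auto
  have V1: "V \<in> carrier_mat m m" "adjoint_mat V * V = 1\<^sub>m m" "V * adjoint_mat V = 1\<^sub>m m" using unitaryD[OF V] by auto
  have aU: "adjoint_mat U \<in> carrier_mat m m" and aV: "adjoint_mat V \<in> carrier_mat m m" using U1 V1 by auto
  have "adjoint_mat (U * V) * (U * V) = adjoint_mat V * adjoint_mat U * (U * V)"
    using U1 V1 aU aV by (simp add: adj_mult[of _ m m])
  also have "\<dots> = adjoint_mat V * (adjoint_mat U * (U * V))"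
    using assoc_mult_mat[OF aV aU mult_carrier_mat[OF U1(1) V1(1)]] .
  also have "\<dots> = adjoint_mat V * ((adjoint_mat U * U) * V)"
    using assoc_mult_mat[OF aU U1(1) V1(1)] by simp
  also have "\<dots> = 1\<^sub>m m" using U1 V1 by simp
  finally have 1: "adjoint_mat (U * V) * (U * V) = 1\<^sub>m m" .
  have "(U * V) * adjoint_mat (U * V) = U * V * (adjoint_mat V * adjoint_mat U)"
    using U1 V1 aU aV by (simp add: adj_mult[of _ m m])
  also have "\<dots> = U * (V * (adjoint_mat V * adjoint_mat U))"
    using assoc_mult_mat[OF U1(1) V1(1) mult_carrier_mat[OF aV aU]] .
  also have "\<dots> = U * ((V * adjoint_mat V) * adjoint_mat U)"
    using assoc_mult_mat[OF V1(1) aV aU] by simp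
  also have "\<dots> = 1\<^sub>m m" using U1 V1 aU by simp
  finally have 2: "(U * V) * adjoint_mat (U * V) = 1\<^sub>m m" .
  show ?thesis using 1 2 U1 V1 unfolding unitary_mats_def by auto
qed

lemma kron_unitary: assumes A: "A \<in> unitary_mats 2"
  shows "kron A (1\<^sub>m n) \<in> unitary_mats (2 * n)"
proof -
  have A1: "A \<in> carrier_mat 2 2" "adjoint_mat A * A = 1\<^sub>m 2" "A * adjoint_mat A = 1\<^sub>m 2" using unitaryD[OF A] by auto
  have aA: "adjoint_mat A \<in> carrier_mat 2 2" using A1 by auto
  show ?thesis unfolding unitary_mats_def
    using A1 aA by (simp add: kron_I_adj kron_I_mult kron_I_one)
qed

lemma add4: "(a::complex) + b + (c + d) = (a + c) + (b + d)" by (simp add: algebra_simps)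

lemma H20_add: "A \<in> H20 \<Longrightarrow> B \<in> H20 \<Longrightarrow> A + B \<in> H20"
  unfolding H20_def by (auto simp: adj_add[of _ 2 2]) (metis add4 add_0)

lemma H20_smult: "A \<in> H20 \<Longrightarrow> complex_of_real r \<cdot>\<^sub>m A \<in> H20"
  unfolding H20_def by (auto simp: adj_smult distrib_left[symmetric])

lemma H20_carrier: "A \<in> H20 \<Longrightarrow> A \<in> carrier_mat 2 2" unfolding H20_def by auto

lemma dir2:
  assumes U: "U \<in> unitary_mats m" and V: "V \<in> unitary_mats m" and mn: "m = 2 * n"
    and phi: "\<forall>A\<in>H20. \<phi> A = U * kron A (1\<^sub>m n) * V"
  shows "real_linear_on_H20 \<phi> \<and> \<phi> ` IH20 \<subseteq> unitary_mats m"
proof -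
  have U1: "U \<in> carrier_mat m m" using unitaryD[OF U] by auto
  have V1: "V \<in> carrier_mat m m" using unitaryD[OF V] by auto
  have K: "\<And>A. A \<in> H20 \<Longrightarrow> kron A (1\<^sub>m n) \<in> carrier_mat m m" using mn H20_carrier by auto
  have add: "\<phi> (A + B) = \<phi> A + \<phi> B" if A: "A \<in> H20" and B: "B \<in> H20" for A B
  proof -
    have "\<phi> (A + B) = U * (kron A (1\<^sub>m n) + kron B (1\<^sub>m n)) * V"
      using phi H20_add[OF A B] kron_I_add[OF H20_carrier[OF A] H20_carrier[OF B]] by simp
    also have "\<dots> = U * kron A (1\<^sub>m n) * V + U * kron B (1\<^sub>m n) * V"
      using U1 V1 K[OF A] K[OF B]
      by (simp add: mult_add_distrib_mat[of _ m m] add_mult_distrib_mat[of _ m m])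
    finally show ?thesis using phi A B by simp
  qed
  have smult: "\<phi> (complex_of_real r \<cdot>\<^sub>m A) = complex_of_real r \<cdot>\<^sub>m \<phi> A" if A: "A \<in> H20" for A r
  proof -
    have "\<phi> (complex_of_real r \<cdot>\<^sub>m A) = U * (complex_of_real r \<cdot>\<^sub>m kron A (1\<^sub>m n)) * V"
      using phi H20_smult[OF A] kron_I_smult[OF H20_carrier[OF A]] by simp
    also have "\<dots> = complex_of_real r \<cdot>\<^sub>m (U * kron A (1\<^sub>m n) * V)"
      using U1 V1 K[OF A]
      by (simp add: mult_smult_distrib[of _ m m] mult_smult_assoc_mat[of _ m m])
    finally show ?thesis using phi A by simp
  qed
  have unit: "\<phi> A \<in> unitary_mats m" if A: "A \<in> IH20" for A
  proof -
    have "A \<in> H20" "A \<in> unitary_mats 2" using A unfolding IH20_def by auto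
    then have "kron A (1\<^sub>m n) \<in> unitary_mats m" using kron_unitary mn by auto
    then show ?thesis using phi \<open>A \<in> H20\<close> U V unitary_mult by simp
  qed
  show ?thesis unfolding real_linear_on_H20_def using add smult unit by auto
qed



lemma lin_comb_adj_mult:
  assumes X: "X \<in> carrier_mat m m" and Y: "Y \<in> carrier_mat m m"
  shows "adjoint_mat (complex_of_real a \<cdot>\<^sub>m X + complex_of_real b \<cdot>\<^sub>m Y) * (complex_of_real a \<cdot>\<^sub>m X + complex_of_real b \<cdot>\<^sub>m Y)
     = complex_of_real (a^2) \<cdot>\<^sub>m (adjoint_mat X * X) + complex_of_real (a*b) \<cdot>\<^sub>m (adjoint_mat X * Y + adjoint_mat Y * X)
       + complex_of_real (b^2) \<cdot>\<^sub>m (adjoint_mat Y * Y)"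
  using X Y by (intro eq_matI) (auto simp: sum.distrib sum_distrib_left algebra_simps power2_eq_square)

lemma lin_comb_mult_adj:
  assumes X: "X \<in> carrier_mat m m" and Y: "Y \<in> carrier_mat m m"
  shows "(complex_of_real a \<cdot>\<^sub>m X + complex_of_real b \<cdot>\<^sub>m Y) * adjoint_mat (complex_of_real a \<cdot>\<^sub>m X + complex_of_real b \<cdot>\<^sub>m Y)
     = complex_of_real (a^2) \<cdot>\<^sub>m (X * adjoint_mat X) + complex_of_real (a*b) \<cdot>\<^sub>m (X * adjoint_mat Y + Y * adjoint_mat X)
       + complex_of_real (b^2) \<cdot>\<^sub>m (Y * adjoint_mat Y)"
  using X Y by (intro eq_matI) (auto simp: sum.distrib sum_distrib_left algebra_simps power2_eq_square)

lemma anti_aux: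
  assumes S: "S \<in> carrier_mat m m" and ab: "a^2 + b^2 = 1" "a * b \<noteq> 0"
    and e: "complex_of_real (a^2) \<cdot>\<^sub>m 1\<^sub>m m + complex_of_real (a*b) \<cdot>\<^sub>m S + complex_of_real (b^2) \<cdot>\<^sub>m 1\<^sub>m m = 1\<^sub>m m"
  shows "S = 0\<^sub>m m m"
proof (rule eq_matI)
  fix i j assume "i < dim_row (0\<^sub>m m m :: complex mat)" "j < dim_col (0\<^sub>m m m :: complex mat)"
  then have ij: "i < m" "j < m" by auto
  have "(complex_of_real (a^2) \<cdot>\<^sub>m 1\<^sub>m m + complex_of_real (a*b) \<cdot>\<^sub>m S + complex_of_real (b^2) \<cdot>\<^sub>m 1\<^sub>m m) $$ (i,j) = 1\<^sub>m m $$ (i,j)"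
    using e by simp
  then have "complex_of_real (a^2 + b^2) * (if i = j then 1 else 0) + complex_of_real (a*b) * S $$ (i,j) = (if i = j then 1 else 0)"
    using ij S by (simp add: algebra_simps)
  then have "complex_of_real (a*b) * S $$ (i,j) = 0" using ab by simp
  then show "S $$ (i,j) = 0\<^sub>m m m $$ (i,j)" using ab ij by simp
qed (use S in auto)

lemma anti:
  assumes X: "X \<in> unitary_mats m" and Y: "Y \<in> unitary_mats m" and ab: "a^2 + b^2 = 1" "a * b \<noteq> 0"
    and XY: "complex_of_real a \<cdot>\<^sub>m X + complex_of_real b \<cdot>\<^sub>m Y \<in> unitary_mats m"
  shows "adjoint_mat X * Y + adjoint_mat Y * X = 0\<^sub>m m m \<and> X * adjoint_mat Y + Y * adjoint_mat X = 0\<^sub>m m m"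
proof -
  have X1: "X \<in> carrier_mat m m" "adjoint_mat X * X = 1\<^sub>m m" "X * adjoint_mat X = 1\<^sub>m m" using unitaryD[OF X] by auto
  have Y1: "Y \<in> carrier_mat m m" "adjoint_mat Y * Y = 1\<^sub>m m" "Y * adjoint_mat Y = 1\<^sub>m m" using unitaryD[OF Y] by auto
  have XY1: "adjoint_mat (complex_of_real a \<cdot>\<^sub>m X + complex_of_real b \<cdot>\<^sub>m Y) * (complex_of_real a \<cdot>\<^sub>m X + complex_of_real b \<cdot>\<^sub>m Y) = 1\<^sub>m m"
    "(complex_of_real a \<cdot>\<^sub>m X + complex_of_real b \<cdot>\<^sub>m Y) * adjoint_mat (complex_of_real a \<cdot>\<^sub>m X + complex_of_real b \<cdot>\<^sub>m Y) = 1\<^sub>m m"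
    using unitaryD[OF XY] by auto
  show ?thesis
  proof
    show "adjoint_mat X * Y + adjoint_mat Y * X = 0\<^sub>m m m"
      by (rule anti_aux[OF _ ab]) (use X1 Y1 XY1(1) lin_comb_adj_mult[OF X1(1) Y1(1), of a b] in auto)
    show "X * adjoint_mat Y + Y * adjoint_mat X = 0\<^sub>m m m"
      by (rule anti_aux[OF _ ab]) (use X1 Y1 XY1(2) lin_comb_mult_adj[OF X1(1) Y1(1), of a b] in auto)
  qed
qed



definition pm :: "real \<Rightarrow> real \<Rightarrow> real \<Rightarrow> complex mat" where
  "pm a b c = complex_of_real a \<cdot>\<^sub>m sx + complex_of_real b \<cdot>\<^sub>m sy + complex_of_real c \<cdot>\<^sub>m sz"

lemma pm_carrier[simp]: "pm a b c \<in> carrier_mat 2 2" by (simp add: pm_def)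

lemma pm_dims[simp]: "dim_row (pm a b c) = 2" "dim_col (pm a b c) = 2" by (auto simp: pm_def sx_def sy_def sz_def)

lemma pauli_dims[simp]: "dim_row sx = 2" "dim_col sx = 2" "dim_row sy = 2" "dim_col sy = 2"
  "dim_row sz = 2" "dim_col sz = 2" by (auto simp: sx_def sy_def sz_def)

lemma pm_entries: "pm a b c $$ (0,0) = c" "pm a b c $$ (0,Suc 0) = a - \<i> * b"
  "pm a b c $$ (Suc 0,0) = a + \<i> * b" "pm a b c $$ (Suc 0,Suc 0) = - c"
  by (auto simp: pm_def sx_def sy_def sz_def)

lemma mat2_eqI: assumes "A \<in> carrier_mat 2 2" "B \<in> carrier_mat 2 2"
  "A $$ (0,0) = B $$ (0,0)" "A $$ (0,Suc 0) = B $$ (0,Suc 0)" "A $$ (Suc 0,0) = B $$ (Suc 0,0)" "A $$ (Suc 0,Suc 0) = B $$ (Suc 0,Suc 0)"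
  shows "A = B"
  using assms by (intro eq_matI) (auto dest!: less_2_cases)

lemma pm_adj: "adjoint_mat (pm a b c) = pm a b c"
  by (rule mat2_eqI) (auto simp: pm_entries)

lemma pm_H20: "pm a b c \<in> H20"
  unfolding H20_def by (auto simp: pm_adj pm_entries)

lemma pm_sq: "pm a b c * pm a b c = complex_of_real (a^2 + b^2 + c^2) \<cdot>\<^sub>m 1\<^sub>m 2"
  by (rule mat2_eqI) (auto simp: sum2 pm_entries algebra_simps power2_eq_square complex_eq_iff)

lemma pm_IH20: assumes "a^2 + b^2 + c^2 = 1" shows "pm a b c \<in> IH20"
proof -
  have "pm a b c * pm a b c = 1\<^sub>m 2"
    by (subst pm_sq, subst assms) (intro eq_matI, auto)
  then show ?thesis unfolding IH20_def unitary_mats_def using pm_H20 pm_adj by auto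
qed

lemma H20_decomp: assumes A: "A \<in> H20"
  shows "A = pm (Re (A $$ (1,0))) (Im (A $$ (1,0))) (Re (A $$ (0,0)))"
proof -
  have A2: "A \<in> carrier_mat 2 2" and h: "adjoint_mat A = A" and t: "A $$ (0,0) + A $$ (1,1) = 0"
    using A unfolding H20_def by auto
  have "adjoint_mat A $$ (0,0) = A $$ (0,0)" "adjoint_mat A $$ (0,1) = A $$ (0,1)"
    using h by auto
  then have e: "cnj (A $$ (0,0)) = A $$ (0,0)" "cnj (A $$ (1,0)) = A $$ (0,1)" using A2 by auto
  have r: "Im (A $$ (0,0)) = 0" using e(1) by (simp add: complex_eq_iff)
  have 11: "A $$ (1,1) = - A $$ (0,0)" using t by (simp add: eq_neg_iff_add_eq_0 add.commute)
  show ?thesis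
  proof (rule mat2_eqI[OF A2 pm_carrier])
    show "A $$ (0,0) = pm (Re (A $$ (1,0))) (Im (A $$ (1,0))) (Re (A $$ (0,0))) $$ (0,0)"
      unfolding pm_entries using r by (simp add: complex_eq_iff)
    show "A $$ (0,Suc 0) = pm (Re (A $$ (1,0))) (Im (A $$ (1,0))) (Re (A $$ (0,0))) $$ (0,Suc 0)"
      unfolding pm_entries using e(2) by (simp add: complex_eq_iff flip: One_nat_def)
    show "A $$ (Suc 0,0) = pm (Re (A $$ (1,0))) (Im (A $$ (1,0))) (Re (A $$ (0,0))) $$ (Suc 0,0)"
      unfolding pm_entries by (simp add: complex_eq_iff)
    show "A $$ (Suc 0,Suc 0) = pm (Re (A $$ (1,0))) (Im (A $$ (1,0))) (Re (A $$ (0,0))) $$ (Suc 0,Suc 0)"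
      unfolding pm_entries using 11 r by (simp add: complex_eq_iff)
  qed
qed

lemma pauli_pm: "sx = pm 1 0 0" "sy = pm 0 1 0" "sz = pm 0 0 1"
  by (auto intro!: mat2_eqI simp: pm_entries sx_def sy_def sz_def)

lemma pauli_prods: "sx * sy = \<i> \<cdot>\<^sub>m sz" "sy * sy = 1\<^sub>m 2" "sz * sy = (- \<i>) \<cdot>\<^sub>m sx"
  by (auto intro!: mat2_eqI simp: sum2 sx_def sy_def sz_def)

lemma pm_lin: "pm a b c = complex_of_real a \<cdot>\<^sub>m sx + complex_of_real b \<cdot>\<^sub>m sy + complex_of_real c \<cdot>\<^sub>m sz"
  by (simp add: pm_def)



lemma one_smult_mat: "(1::complex) \<cdot>\<^sub>m A = A" by (intro eq_matI) auto

lemma smult_uminus_mat: "(c::complex) \<cdot>\<^sub>m (- A) = (- c) \<cdot>\<^sub>m A" by (intro eq_matI) auto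

lemma sum_zero_neg: assumes "(A::complex mat) \<in> carrier_mat n k" "B \<in> carrier_mat n k" "A + B = 0\<^sub>m n k"
  shows "B = - A"
proof (rule eq_matI)
  fix i j assume ij: "i < dim_row (- A)" "j < dim_col (- A)"
  have "(A + B) $$ (i,j) = 0\<^sub>m n k $$ (i,j)" by (simp only: assms(3))
  then have "(A + B) $$ (i,j) = 0" using assms(1,2) ij by simp
  then show "B $$ (i,j) = (- A) $$ (i,j)" using assms(1,2) ij by (simp add: eq_neg_iff_add_eq_0 add.commute)
qed (use assms in auto)

lemma assoc4: assumes "A \<in> carrier_mat m m" "B \<in> carrier_mat m m" "G \<in> carrier_mat m m" "H \<in> carrier_mat m m"
  shows "A * B * (G * H) = A * (B * G) * H"
  using assms by (simp add: assoc_mult_mat[of _ m m _ m _ m])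

lemma assoc5: assumes "A \<in> carrier_mat m m" "B \<in> carrier_mat m m" "G \<in> carrier_mat m m" "H \<in> carrier_mat m m"
  "L \<in> carrier_mat m m"
  shows "A * B * (G * H * L) = A * (B * G) * H * L"
  using assms by (simp add: assoc_mult_mat[of _ m m _ m _ m])

lemma unitary_adj: "U \<in> unitary_mats m \<Longrightarrow> adjoint_mat U \<in> unitary_mats m"
  unfolding unitary_mats_def by auto

lemma lin2: assumes lin: "real_linear_on_H20 f" and A: "A \<in> H20" and B: "B \<in> H20"
  shows "f (complex_of_real a \<cdot>\<^sub>m A + complex_of_real b \<cdot>\<^sub>m B) = complex_of_real a \<cdot>\<^sub>m f A + complex_of_real b \<cdot>\<^sub>m f B"
  using lin H20_smult[OF A] H20_smult[OF B] A B unfolding real_linear_on_H20_def by simp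

lemma lin3: assumes lin: "real_linear_on_H20 f"
  shows "f (pm a b c) = complex_of_real a \<cdot>\<^sub>m f sx + complex_of_real b \<cdot>\<^sub>m f sy + complex_of_real c \<cdot>\<^sub>m f sz"
proof -
  have H: "sx \<in> H20" "sy \<in> H20" "sz \<in> H20" using pm_H20 pauli_pm by metis+
  have "f (pm a b c) = f (complex_of_real a \<cdot>\<^sub>m sx + complex_of_real b \<cdot>\<^sub>m sy) + f (complex_of_real c \<cdot>\<^sub>m sz)"
    unfolding pm_def using lin H H20_smult H20_add unfolding real_linear_on_H20_def by simp
  then show ?thesis using lin2[OF lin H(1,2)] lin H(3) unfolding real_linear_on_H20_def by simp
qed

lemma pair_pm: "complex_of_real a \<cdot>\<^sub>m sx + complex_of_real b \<cdot>\<^sub>m sy = pm a b 0"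
  "complex_of_real b \<cdot>\<^sub>m sy + complex_of_real c \<cdot>\<^sub>m sz = pm 0 b c"
  "complex_of_real a \<cdot>\<^sub>m sx + complex_of_real c \<cdot>\<^sub>m sz = pm a 0 c"
  by (auto intro!: mat2_eqI simp: pm_entries sx_def sy_def sz_def)



lemma dir1:
  assumes lin: "real_linear_on_H20 \<phi>" and uni: "\<phi> ` IH20 \<subseteq> unitary_mats m"
  shows "\<exists>U V n. U \<in> unitary_mats m \<and> V \<in> unitary_mats m \<and> m = 2 * n \<and>
             (\<forall>A\<in>H20. \<phi> A = U * kron A (1\<^sub>m n) * V)"
proof -
  define X where "X = \<phi> sx"
  define Y where "Y = \<phi> sy"
  define Z where "Z = \<phi> sz"
  have H: "sx \<in> H20" "sy \<in> H20" "sz \<in> H20" using pm_H20 pauli_pm by metis+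
  have IH: "sx \<in> IH20" "sy \<in> IH20" "sz \<in> IH20" unfolding pauli_pm by (auto intro: pm_IH20)
  have uX: "X \<in> unitary_mats m" and uY: "Y \<in> unitary_mats m" and uZ: "Z \<in> unitary_mats m"
    using uni IH unfolding X_def Y_def Z_def by auto
  have X: "X \<in> carrier_mat m m" "adjoint_mat X * X = 1\<^sub>m m" "X * adjoint_mat X = 1\<^sub>m m" using unitaryD[OF uX] by auto
  have Y: "Y \<in> carrier_mat m m" "adjoint_mat Y * Y = 1\<^sub>m m" "Y * adjoint_mat Y = 1\<^sub>m m" using unitaryD[OF uY] by auto
  have Z: "Z \<in> carrier_mat m m" "adjoint_mat Z * Z = 1\<^sub>m m" "Z * adjoint_mat Z = 1\<^sub>m m" using unitaryD[OF uZ] by auto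
  have aX: "adjoint_mat X \<in> carrier_mat m m" and aY: "adjoint_mat Y \<in> carrier_mat m m"
    and aZ: "adjoint_mat Z \<in> carrier_mat m m" using X Y Z by auto
  have ab: "(3/5::real)^2 + (4/5)^2 = 1" "(3/5::real) * (4/5) \<noteq> 0" by (simp_all add: power2_eq_square)
  have ab0: "(3/5::real)^2 + (4/5)^2 + 0^2 = 1" "(0::real)^2 + (3/5)^2 + (4/5)^2 = 1" "(3/5::real)^2 + 0^2 + (4/5)^2 = 1"
    by (simp_all add: power2_eq_square)
  have "complex_of_real (3/5) \<cdot>\<^sub>m X + complex_of_real (4/5) \<cdot>\<^sub>m Y = \<phi> (pm (3/5) (4/5) 0)"
    unfolding X_def Y_def pair_pm(1)[symmetric] by (rule lin2[OF lin H(1,2), symmetric])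
  then have p1: "complex_of_real (3/5) \<cdot>\<^sub>m X + complex_of_real (4/5) \<cdot>\<^sub>m Y \<in> unitary_mats m"
    using uni pm_IH20[OF ab0(1)] by auto
  have "complex_of_real (3/5) \<cdot>\<^sub>m Y + complex_of_real (4/5) \<cdot>\<^sub>m Z = \<phi> (pm 0 (3/5) (4/5))"
    unfolding Y_def Z_def pair_pm(2)[symmetric] by (rule lin2[OF lin H(2,3), symmetric])
  then have p2: "complex_of_real (3/5) \<cdot>\<^sub>m Y + complex_of_real (4/5) \<cdot>\<^sub>m Z \<in> unitary_mats m"
    using uni pm_IH20[OF ab0(2)] by auto
  have "complex_of_real (3/5) \<cdot>\<^sub>m X + complex_of_real (4/5) \<cdot>\<^sub>m Z = \<phi> (pm (3/5) 0 (4/5))"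
    unfolding X_def Z_def pair_pm(3)[symmetric] by (rule lin2[OF lin H(1,3), symmetric])
  then have p3: "complex_of_real (3/5) \<cdot>\<^sub>m X + complex_of_real (4/5) \<cdot>\<^sub>m Z \<in> unitary_mats m"
    using uni pm_IH20[OF ab0(3)] by auto
  from anti[OF uX uY ab p1] have
    a1: "adjoint_mat Y * X = - (adjoint_mat X * Y)" and b1: "Y * adjoint_mat X = - (X * adjoint_mat Y)"
    using sum_zero_neg X Y aX aY by (meson mult_carrier_mat)+
  from anti[OF uY uZ ab p2] have
    a2: "adjoint_mat Z * Y = - (adjoint_mat Y * Z)" and b2: "Z * adjoint_mat Y = - (Y * adjoint_mat Z)"
    using sum_zero_neg Z Y aZ aY by (meson mult_carrier_mat)+
  from anti[OF uX uZ ab p3] have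
    a3: "adjoint_mat Z * X = - (adjoint_mat X * Z)" and b3: "Z * adjoint_mat X = - (X * adjoint_mat Z)"
    using sum_zero_neg X Z aX aZ by (meson mult_carrier_mat)+
  define C where "C = (- \<i>) \<cdot>\<^sub>m (X * adjoint_mat Y)"
  define D where "D = \<i> \<cdot>\<^sub>m (Z * adjoint_mat Y)"
  have C: "C \<in> carrier_mat m m" unfolding C_def using X aY by auto
  have D: "D \<in> carrier_mat m m" unfolding D_def using Z aY by auto
  have Ch: "adjoint_mat C = C"
  proof -
    have "adjoint_mat C = \<i> \<cdot>\<^sub>m (Y * adjoint_mat X)"
      unfolding C_def using X aY by (simp add: adj_smult adj_mult[OF X(1) aY])
    also have "\<dots> = C" unfolding C_def b1 smult_uminus_mat by simp
    finally show ?thesis .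
  qed
  have Dh: "adjoint_mat D = D"
  proof -
    have "adjoint_mat D = (- \<i>) \<cdot>\<^sub>m (Y * adjoint_mat Z)"
      unfolding D_def using Z aY by (simp add: adj_smult adj_mult[OF Z(1) aY])
    also have "\<dots> = D" unfolding D_def b2 smult_uminus_mat by simp
    finally show ?thesis .
  qed
  have XYXY: "(X * adjoint_mat Y) * (X * adjoint_mat Y) = - 1\<^sub>m m"
  proof -
    have "(X * adjoint_mat Y) * (X * adjoint_mat Y) = X * (adjoint_mat Y * X) * adjoint_mat Y"
      using assoc4[OF X(1) aY X(1) aY] .
    also have "\<dots> = - (X * (adjoint_mat X * Y) * adjoint_mat Y)" unfolding a1 using X Y aX aY by simp
    also have "X * (adjoint_mat X * Y) * adjoint_mat Y = (X * adjoint_mat X) * (Y * adjoint_mat Y)"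
      using assoc4[OF X(1) aX Y(1) aY] by simp
    finally show ?thesis using X Y by simp
  qed
  have ZYZY: "(Z * adjoint_mat Y) * (Z * adjoint_mat Y) = - 1\<^sub>m m"
  proof -
    have "(Z * adjoint_mat Y) * (Z * adjoint_mat Y) = Z * (adjoint_mat Y * Z) * adjoint_mat Y"
      using assoc4[OF Z(1) aY Z(1) aY] .
    also have "adjoint_mat Y * Z = - (adjoint_mat Z * Y)"
      using sum_zero_neg[of "adjoint_mat Z * Y" m m "adjoint_mat Y * Z"] a2 aY aZ Y Z
      by (metis mult_carrier_mat uminus_uminus_mat)
    also have "Z * - (adjoint_mat Z * Y) * adjoint_mat Y = - (Z * (adjoint_mat Z * Y) * adjoint_mat Y)" using Z Y aZ aY by simp
    also have "Z * (adjoint_mat Z * Y) * adjoint_mat Y = (Z * adjoint_mat Z) * (Y * adjoint_mat Y)"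
      using assoc4[OF Z(1) aZ Y(1) aY] by simp
    finally show ?thesis using Z Y by simp
  qed
  have XYZY: "(X * adjoint_mat Y) * (Z * adjoint_mat Y) = - (X * adjoint_mat Z)"
  proof -
    have "(X * adjoint_mat Y) * (Z * adjoint_mat Y) = X * (adjoint_mat Y * Z) * adjoint_mat Y"
      using assoc4[OF X(1) aY Z(1) aY] .
    also have "adjoint_mat Y * Z = - (adjoint_mat Z * Y)"
      using a2 by (metis uminus_uminus_mat)
    also have "X * - (adjoint_mat Z * Y) * adjoint_mat Y = - (X * (adjoint_mat Z * Y) * adjoint_mat Y)" using X Y Z aZ aY by simp
    also have "X * (adjoint_mat Z * Y) * adjoint_mat Y = (X * adjoint_mat Z) * (Y * adjoint_mat Y)"
      using assoc4[OF X(1) aZ Y(1) aY] by simp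
    finally show ?thesis using X Y Z aZ by simp
  qed
  have ZYXY: "(Z * adjoint_mat Y) * (X * adjoint_mat Y) = X * adjoint_mat Z"
  proof -
    have "(Z * adjoint_mat Y) * (X * adjoint_mat Y) = Z * (adjoint_mat Y * X) * adjoint_mat Y"
      using assoc4[OF Z(1) aY X(1) aY] .
    also have "\<dots> = - (Z * (adjoint_mat X * Y) * adjoint_mat Y)" unfolding a1 using Z X Y aX aY by simp
    also have "Z * (adjoint_mat X * Y) * adjoint_mat Y = (Z * adjoint_mat X) * (Y * adjoint_mat Y)"
      using assoc4[OF Z(1) aX Y(1) aY] by simp
    finally show ?thesis using Z Y X aX aZ unfolding b3 by simp
  qed
  have P1: "X * adjoint_mat Y \<in> carrier_mat m m" using X aY by auto
  have P2: "Z * adjoint_mat Y \<in> carrier_mat m m" using Z aY by auto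
  have smm: "\<And>(c::complex) d (P::complex mat) Q. P \<in> carrier_mat m m \<Longrightarrow> Q \<in> carrier_mat m m \<Longrightarrow>
     (c \<cdot>\<^sub>m P) * (d \<cdot>\<^sub>m Q) = (c * d) \<cdot>\<^sub>m (P * Q)"
  proof -
    fix c d :: complex and P Q :: "complex mat" assume P: "P \<in> carrier_mat m m" and Q: "Q \<in> carrier_mat m m"
    show "(c \<cdot>\<^sub>m P) * (d \<cdot>\<^sub>m Q) = (c * d) \<cdot>\<^sub>m (P * Q)"
      using P Q by (simp add: mult_smult_assoc_mat[OF P smult_carrier_mat[OF Q]] mult_smult_distrib[OF P Q] smult_smult_mat)
  qed
  have CC: "C * C = 1\<^sub>m m"
    unfolding C_def smm[OF P1 P1] XYXY by (intro eq_matI) auto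
  have DD: "D * D = 1\<^sub>m m"
    unfolding D_def smm[OF P2 P2] ZYZY by (intro eq_matI) auto
  have CD: "C * D = - (D * C)"
    unfolding C_def D_def smm[OF P1 P2] smm[OF P2 P1] XYZY ZYXY by (intro eq_matI) auto
  obtain n W where mn: "m = 2 * n" and uW: "W \<in> unitary_mats m"
    and CW: "C * W = W * kron sz (1\<^sub>m n)" and DW: "D * W = W * kron sx (1\<^sub>m n)"
    using key_lemma[OF C D Ch Dh CC DD CD] by blast
  have W: "W \<in> carrier_mat m m" "adjoint_mat W * W = 1\<^sub>m m" "W * adjoint_mat W = 1\<^sub>m m" using unitaryD[OF uW] by auto
  have aW: "adjoint_mat W \<in> carrier_mat m m" using W by auto
  have K: "\<And>A. A \<in> carrier_mat 2 2 \<Longrightarrow> kron A (1\<^sub>m n) \<in> carrier_mat m m" using mn by auto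
  have uKy: "kron sy (1\<^sub>m n) \<in> unitary_mats m" using kron_unitary[of sy n] IH(2) mn unfolding IH20_def by auto
  define V where "V = kron sy (1\<^sub>m n) * adjoint_mat W * Y"
  have uV: "V \<in> unitary_mats m" unfolding V_def
    using unitary_mult[OF unitary_mult[OF uKy unitary_adj[OF uW]] uY] .
  define \<psi> where "\<psi> = (\<lambda>A. W * kron A (1\<^sub>m n) * V)"
  have lin_psi: "real_linear_on_H20 \<psi>" using dir2[OF uW uV mn, of \<psi>] unfolding \<psi>_def by auto
  have step: "\<psi> B = W * (kron B (1\<^sub>m n) * kron sy (1\<^sub>m n)) * adjoint_mat W * Y" if B: "B \<in> carrier_mat 2 2" for B
    unfolding \<psi>_def V_def using assoc5[OF W(1) K[OF B] K[OF pauli_carrier(2)] aW Y(1)] .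
  have sc: "W * (c \<cdot>\<^sub>m P) * adjoint_mat W * Y = c \<cdot>\<^sub>m (W * P * adjoint_mat W * Y)" if P: "P \<in> carrier_mat m m" for c P
    by (simp add: mult_smult_distrib[OF W(1) P] mult_smult_assoc_mat[OF mult_carrier_mat[OF W(1) P] aW]
        mult_smult_assoc_mat[OF mult_carrier_mat[OF mult_carrier_mat[OF W(1) P] aW] Y(1)])
  have cancel: "G * W * adjoint_mat W * Y = G * Y" if G: "G \<in> carrier_mat m m" for G
    using assoc_mult_mat[OF G W(1) aW] W G Y by simp
  have CY: "C * Y = (- \<i>) \<cdot>\<^sub>m X"
    unfolding C_def using X Y aY
    by (simp add: mult_smult_assoc_mat[of _ m m] assoc_mult_mat[OF X(1) aY Y(1)])
  have DY: "D * Y = \<i> \<cdot>\<^sub>m Z"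
    unfolding D_def using Z Y aY
    by (simp add: mult_smult_assoc_mat[of _ m m] assoc_mult_mat[OF Z(1) aY Y(1)])
  have psx: "\<psi> sx = X"
  proof -
    have "\<psi> sx = W * (\<i> \<cdot>\<^sub>m kron sz (1\<^sub>m n)) * adjoint_mat W * Y"
      using step[OF pauli_carrier(1)] by (simp add: kron_I_mult pauli_prods kron_I_smult)
    also have "\<dots> = \<i> \<cdot>\<^sub>m (C * W * adjoint_mat W * Y)" using sc[OF K[OF pauli_carrier(3)]] CW by simp
    also have "\<dots> = X" using cancel[OF C] CY X by (simp add: smult_smult_mat one_smult_mat)
    finally show ?thesis .
  qed
  have psy: "\<psi> sy = Y"
  proof -
    have "\<psi> sy = W * 1\<^sub>m m * adjoint_mat W * Y"
      using step[OF pauli_carrier(2)] mn by (simp add: kron_I_mult pauli_prods kron_I_one)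
    also have "\<dots> = Y" using W aW Y by simp
    finally show ?thesis .
  qed
  have psz: "\<psi> sz = Z"
  proof -
    have "\<psi> sz = W * ((- \<i>) \<cdot>\<^sub>m kron sx (1\<^sub>m n)) * adjoint_mat W * Y"
      using step[OF pauli_carrier(3)] by (simp add: kron_I_mult pauli_prods kron_I_smult)
    also have "\<dots> = (- \<i>) \<cdot>\<^sub>m (D * W * adjoint_mat W * Y)" using sc[OF K[OF pauli_carrier(1)]] DW by simp
    also have "\<dots> = Z" using cancel[OF D] DY Z by (simp add: smult_smult_mat one_smult_mat)
    finally show ?thesis .
  qed
  have "\<forall>A\<in>H20. \<phi> A = W * kron A (1\<^sub>m n) * V"
  proof
    fix A assume A: "A \<in> H20"
    have "\<phi> A = \<psi> A"
      using H20_decomp[OF A] lin3[OF lin] lin3[OF lin_psi] psx psy psz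
      unfolding X_def Y_def Z_def by metis
    then show "\<phi> A = W * kron A (1\<^sub>m n) * V" unfolding \<psi>_def .
  qed
  then show ?thesis using uW uV mn by blast
qed


theorem proposition3p4:
  fixes m :: nat and \<phi> :: "complex mat \<Rightarrow> complex mat"
  assumes "\<forall>A\<in>H20. \<phi> A \<in> carrier_mat m m"
  shows "(real_linear_on_H20 \<phi> \<and> \<phi> ` IH20 \<subseteq> unitary_mats m) \<longleftrightarrow>
         (\<exists>U V n. U \<in> unitary_mats m \<and> V \<in> unitary_mats m \<and> m = 2 * n \<and>
             (\<forall>A\<in>H20. \<phi> A = U * kron A (1\<^sub>m n) * V))"
proof
  assume "real_linear_on_H20 \<phi> \<and> \<phi> ` IH20 \<subseteq> unitary_mats m"
  then show "\<exists>U V n. U \<in> unitary_mats m \<and> V \<in> unitary_mats m \<and> m = 2 * n \<and>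
             (\<forall>A\<in>H20. \<phi> A = U * kron A (1\<^sub>m n) * V)"
    using dir1 by blast
next
  assume "\<exists>U V n. U \<in> unitary_mats m \<and> V \<in> unitary_mats m \<and> m = 2 * n \<and>
             (\<forall>A\<in>H20. \<phi> A = U * kron A (1\<^sub>m n) * V)"
  then obtain U V n where "U \<in> unitary_mats m" "V \<in> unitary_mats m" "m = 2 * n"
    "\<forall>A\<in>H20. \<phi> A = U * kron A (1\<^sub>m n) * V" by blast
  then show "real_linear_on_H20 \<phi> \<and> \<phi> ` IH20 \<subseteq> unitary_mats m" using dir2 by blast
qed

end
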